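(* Let $G$ be a connected nontrivial graph with $m$ vertices and let $n\geq3$. If $\min\{3n\lambda(G),\ 2(m+2e(G))\}> 6\delta(G)+2$, then $G\boxtimes C_n$ is super restricted edge-connected.
   Context: All graphs are finite, simple and undirected; "nontrivial" means having at least two vertices. $C_n$ denotes the cycle on $n$ vertices. For a graph $G$: $e(G)=|E(G)|$; $\delta(G)$ is the minimum degree; $\lambda(G)$ is the edge-connectivity. A restricted edge-cut of a connected graph $G$ is a set $S\subseteq E(G)$ such that $G-S$ is disconnected and every component of $G-S$ has at least $2$ vertices; $\lambda'(G)$ is the minimum cardinality of a restricted edge-cut. A graph is super restricted edge-connected if every minimum restricted edge-cut $S$ isolates an edge, i.e. some component of $G-S$ consists of exactly two (adjacent) vertices. The strong product $G\boxtimes H$ has vertex set $V(G)\times V(H)$, with $(x_1,y_1)$ and $(x_2,y_2)$ adjacent iff either $x_1=x_2$ and $y_1y_2\in E(H)$, or $y_1=y_2$ and $x_1x_2\in E(G)$, or $x_1x_2\in E(G)$ and $y_1y_2\in E(H)$. *)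

theory Defs
  imports Main
begin

type_synonym 'a graph = "'a set \<times> 'a set set"

definition verts :: "'a graph \<Rightarrow> 'a set" where "verts G = fst G"
definition edges :: "'a graph \<Rightarrow> 'a set set" where "edges G = snd G"

definition simple_graph :: "'a graph \<Rightarrow> bool" where
  "simple_graph G \<longleftrightarrow> finite (verts G) \<and>
     (\<forall>e\<in>edges G. \<exists>x y. x \<noteq> y \<and> x \<in> verts G \<and> y \<in> verts G \<and> e = {x, y})"

definition adj_rel :: "'a graph \<Rightarrow> ('a \<times> 'a) set" where
  "adj_rel G = {(x, y). {x, y} \<in> edges G}"

definition connected_graph :: "'a graph \<Rightarrow> bool" where
  "connected_graph G \<longleftrightarrow> verts G \<noteq> {} \<and>
     (\<forall>x\<in>verts G. \<forall>y\<in>verts G. (x, y) \<in> (adj_rel G)\<^sup>*)"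

definition components :: "'a graph \<Rightarrow> 'a set set" where
  "components G = {{y \<in> verts G. (x, y) \<in> (adj_rel G)\<^sup>*} | x. x \<in> verts G}"

definition num_edges :: "'a graph \<Rightarrow> nat" where "num_edges G = card (edges G)"

definition degree :: "'a graph \<Rightarrow> 'a \<Rightarrow> nat" where
  "degree G v = card {e \<in> edges G. v \<in> e}"

definition min_degree :: "'a graph \<Rightarrow> nat" where
  "min_degree G = Min (degree G ` verts G)"

definition del_edges :: "'a graph \<Rightarrow> 'a set set \<Rightarrow> 'a graph" where
  "del_edges G S = (verts G, edges G - S)"

definition edge_cut :: "'a graph \<Rightarrow> 'a set set \<Rightarrow> bool" where
  "edge_cut G S \<longleftrightarrow> S \<subseteq> edges G \<and> \<not> connected_graph (del_edges G S)"

definition edge_connectivity :: "'a graph \<Rightarrow> nat" where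
  "edge_connectivity G = Min {card S | S. edge_cut G S}"

definition restricted_edge_cut :: "'a graph \<Rightarrow> 'a set set \<Rightarrow> bool" where
  "restricted_edge_cut G S \<longleftrightarrow> edge_cut G S \<and>
     (\<forall>C\<in>components (del_edges G S). card C \<ge> 2)"

definition super_restricted_edge_connected :: "'a graph \<Rightarrow> bool" where
  "super_restricted_edge_connected G \<longleftrightarrow>
     (\<forall>S. restricted_edge_cut G S \<and> (\<forall>T. restricted_edge_cut G T \<longrightarrow> card S \<le> card T) \<longrightarrow>
        (\<exists>C\<in>components (del_edges G S). card C = 2))"

definition cycle_graph :: "nat \<Rightarrow> nat graph" where
  "cycle_graph n = ({0..<n}, {{i, (i + 1) mod n} | i. i < n})"

definition strong_product :: "'a graph \<Rightarrow> 'b graph \<Rightarrow> ('a \<times> 'b) graph" where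
  "strong_product G H = (verts G \<times> verts H,
     {{(x1, y1), (x2, y2)} | x1 y1 x2 y2.
        x1 \<in> verts G \<and> x2 \<in> verts G \<and> y1 \<in> verts H \<and> y2 \<in> verts H \<and>
        ((x1 = x2 \<and> {y1, y2} \<in> edges H) \<or> (y1 = y2 \<and> {x1, x2} \<in> edges G) \<or>
         ({x1, x2} \<in> edges G \<and> {y1, y2} \<in> edges H))})"

end

theory Submission
  imports Defs
begin

locale SP =
  fixes G :: "'a graph" and n :: nat
  assumes sg: "simple_graph G" and n3: "3 \<le> n"
begin

abbreviation "V \<equiv> verts G"
abbreviation "E \<equiv> edges G"
definition gadj where "gadj x z \<longleftrightarrow> {x,z} \<in> E"
definition sc where "sc i = Suc i mod n"
definition P where "P = strong_product G (cycle_graph n)"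
definition padj :: "('a \<times> nat) \<Rightarrow> ('a \<times> nat) \<Rightarrow> bool" where
 "padj u v \<longleftrightarrow> fst u \<in> V \<and> fst v \<in> V \<and> snd u < n \<and> snd v < n \<and>
   ((fst u = fst v \<and> (snd v = sc (snd u) \<or> snd u = sc (snd v))) \<or>
    (snd u = snd v \<and> gadj (fst u) (fst v)) \<or>
    (gadj (fst u) (fst v) \<and> (snd v = sc (snd u) \<or> snd u = sc (snd v))))"

lemma finV: "finite V" using sg by (simp add: simple_graph_def)

lemma gadj_sym: "gadj x z = gadj z x" by (simp add: gadj_def insert_commute)

lemma gadjD: "gadj x z \<Longrightarrow> x \<in> V \<and> z \<in> V \<and> x \<noteq> z"
proof -
  assume "gadj x z"
  then have "{x,z} \<in> E" by (simp add: gadj_def)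
  then obtain a b where "a \<noteq> b" "a \<in> V" "b \<in> V" "{x,z} = {a,b}"
    using sg unfolding simple_graph_def by blast
  then show ?thesis by (auto simp: doubleton_eq_iff)
qed

lemma sc_lt: "sc i < n" using n3 by (simp add: sc_def)
lemma sc_eq: "i < n \<Longrightarrow> sc i = (if Suc i = n then 0 else Suc i)"
  unfolding sc_def by (cases "Suc i = n") auto
lemma sc_neq: "i < n \<Longrightarrow> sc i \<noteq> i" using n3 by (simp add: sc_eq)
lemma sc_inj: "i < n \<Longrightarrow> j < n \<Longrightarrow> sc i = sc j \<Longrightarrow> i = j"
  using n3 by (auto simp: sc_eq split: if_splits)
lemma sc_sc_neq: "i < n \<Longrightarrow> sc (sc i) \<noteq> i"
  using n3 sc_lt[of i] by (auto simp: sc_eq split: if_splits)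

lemma cyc_edge: "{i,j} \<in> edges (cycle_graph n) \<longleftrightarrow> i < n \<and> j < n \<and> (j = sc i \<or> i = sc j)"
  using n3 unfolding cycle_graph_def edges_def sc_def
  by (auto simp: doubleton_eq_iff)

lemma vertsP: "verts P = V \<times> {0..<n}"
  by (simp add: P_def strong_product_def verts_def cycle_graph_def)

lemma cvs: "verts (cycle_graph n) = {0..<n}" by (simp add: cycle_graph_def verts_def)

lemma padj_sym: "padj u v = padj v u"
  unfolding padj_def using gadj_sym by auto

lemma pc_padj: "(x1 \<in> V \<and> x2 \<in> V \<and> y1 \<in> verts (cycle_graph n) \<and> y2 \<in> verts (cycle_graph n) \<and>
        ((x1 = x2 \<and> {y1, y2} \<in> edges (cycle_graph n)) \<or> (y1 = y2 \<and> {x1, x2} \<in> E) \<or>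
         ({x1, x2} \<in> E \<and> {y1, y2} \<in> edges (cycle_graph n)))) = padj (x1,y1) (x2,y2)"
  unfolding padj_def cvs cyc_edge gadj_def fst_conv snd_conv atLeastLessThan_iff by blast

lemma edgesP: "edges P = {{u,v} | u v. padj u v}"
  unfolding P_def strong_product_def edges_def[of "(_,_)"] snd_conv pc_padj by auto

lemma P_edge: "{u,v} \<in> edges P \<longleftrightarrow> padj u v"
proof
  assume "{u,v} \<in> edges P"
  then obtain a b where "{u,v} = {a,b}" "padj a b" unfolding edgesP by blast
  then have "(u = a \<and> v = b) \<or> (u = b \<and> v = a)" by (simp add: doubleton_eq_iff)
  then show "padj u v" using padj_sym \<open>padj a b\<close> by blast
next
  assume "padj u v" then show "{u,v} \<in> edges P" unfolding edgesP by blast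
qed


end

context SP begin

lemma finE: "finite E"
proof -
  have "E \<subseteq> Pow V"
  proof
    fix e assume "e \<in> E"
    then obtain x y where "x \<in> V" "y \<in> V" "e = {x,y}" using sg unfolding simple_graph_def by blast
    then show "e \<in> Pow V" by simp
  qed
  then show ?thesis by (rule finite_subset) (simp add: finV)
qed

definition N where "N x = {z. gadj x z}"

lemma N_sub: "N x \<subseteq> V" unfolding N_def using gadjD by blast
lemma finN: "finite (N x)" by (rule finite_subset[OF N_sub finV])
lemma x_notin_N: "x \<notin> N x" unfolding N_def using gadjD by blast

lemma degree_N: "degree G x = card (N x)"
proof -
  have "{e \<in> E. x \<in> e} = (\<lambda>z. {x,z}) ` N x"
  proof
    show "{e \<in> E. x \<in> e} \<subseteq> (\<lambda>z. {x,z}) ` N x"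
    proof
      fix e assume e: "e \<in> {e \<in> E. x \<in> e}"
      then have eE: "e \<in> E" and xe: "x \<in> e" by auto
      then obtain a b where ab: "a \<noteq> b" "e = {a,b}" using sg unfolding simple_graph_def by blast
      show "e \<in> (\<lambda>z. {x,z}) ` N x"
      proof (cases "x = a")
        case True
        then have "gadj x b" using eE ab unfolding gadj_def by simp
        then have "b \<in> N x" unfolding N_def by simp
        moreover have "e = {x,b}" using ab True by simp
        ultimately show ?thesis by (rule rev_image_eqI)
      next
        case False
        then have xb: "x = b" using xe ab by auto
        then have "e = {x,a}" using ab by (simp add: insert_commute)
        moreover have "gadj x a" using eE \<open>e = {x,a}\<close> unfolding gadj_def by simp
        then have "a \<in> N x" unfolding N_def by simp
        ultimately show ?thesis by (intro rev_image_eqI)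
      qed
    qed
    show "(\<lambda>z. {x,z}) ` N x \<subseteq> {e \<in> E. x \<in> e}" unfolding N_def gadj_def by auto
  qed
  moreover have "inj_on (\<lambda>z. {x,z}) (N x)" unfolding inj_on_def by (auto simp: doubleton_eq_iff)
  ultimately show ?thesis unfolding degree_def by (simp add: card_image)
qed

abbreviation "delta \<equiv> min_degree G"
abbreviation "lam \<equiv> edge_connectivity G"

lemma delta_le: "x \<in> V \<Longrightarrow> delta \<le> card (N x)"
  unfolding min_degree_def using finV by (simp add: degree_N[symmetric])

lemma delta_ex: "V \<noteq> {} \<Longrightarrow> \<exists>x\<in>V. card (N x) = delta"
proof -
  assume "V \<noteq> {}"
  then have "delta \<in> degree G ` V" unfolding min_degree_def using finV by (intro Min_in) auto
  then show ?thesis using degree_N by auto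
qed

definition CPG where "CPG B = {(x,z). x \<in> B \<and> z \<in> V - B \<and> gadj x z}"

lemma finCPG: "finite (CPG B)"
proof -
  have "CPG B \<subseteq> V \<times> V" unfolding CPG_def using gadjD by auto
  then show ?thesis by (rule finite_subset) (simp add: finV)
qed

lemma lam_le_card: "edge_cut G S \<Longrightarrow> lam \<le> card S"
proof -
  assume a: "edge_cut G S"
  have cE: "card T \<le> card E" if "edge_cut G T" for T
    using that finE unfolding edge_cut_def by (simp add: card_mono)
  have "{card S | S. edge_cut G S} \<subseteq> {..card E}" using cE by blast
  then have fin: "finite {card S | S. edge_cut G S}" by (rule finite_subset) simp
  have "card S \<in> {card S | S. edge_cut G S}" using a by blast
  then show ?thesis unfolding edge_connectivity_def by (rule Min_le[OF fin])
qed

lemma lam_le: assumes B: "B \<subseteq> V" "x0 \<in> B" "z0 \<in> V" "z0 \<notin> B"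
  shows "lam \<le> card (CPG B)"
proof -
  define S where "S = (\<lambda>(x,z). {x,z}) ` CPG B"
  have cS: "card S \<le> card (CPG B)" unfolding S_def using finCPG card_image_le by blast
  have SE: "S \<subseteq> E" unfolding S_def CPG_def gadj_def by auto
  have reach: "w \<in> B" if "(x0, w) \<in> (adj_rel (del_edges G S))\<^sup>*" for w
    using that
  proof (induction rule: rtrancl_induct)
    case base then show ?case using B by simp
  next
    case (step w w')
    then have e: "{w,w'} \<in> E" "{w,w'} \<notin> S"
      unfolding adj_rel_def del_edges_def edges_def by auto
    then have "gadj w w'" unfolding gadj_def by simp
    then have "w' \<in> V" using gadjD by blast
    show ?case
    proof (rule ccontr)
      assume "w' \<notin> B"
      then have "(w, w') \<in> CPG B" using step.IH \<open>w' \<in> V\<close> \<open>gadj w w'\<close> unfolding CPG_def by simp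
      then have "{w,w'} \<in> S" unfolding S_def by (rule rev_image_eqI) simp
      then show False using e by simp
    qed
  qed
  have "\<not> connected_graph (del_edges G S)"
  proof
    assume "connected_graph (del_edges G S)"
    moreover have "verts (del_edges G S) = V" by (simp add: del_edges_def verts_def)
    ultimately have "(x0, z0) \<in> (adj_rel (del_edges G S))\<^sup>*"
      unfolding connected_graph_def using B by blast
    then show False using reach B by blast
  qed
  then have "edge_cut G S" using SE unfolding edge_cut_def by simp
  then show ?thesis using lam_le_card[OF \<open>edge_cut G S\<close>] cS by linarith
qed

lemma card_CPG_single: "card (CPG {x}) \<le> card (N x)"
proof -
  have "CPG {x} \<subseteq> (\<lambda>z. (x,z)) ` N x" unfolding CPG_def N_def by auto
  then have "card (CPG {x}) \<le> card ((\<lambda>z. (x,z)) ` N x)" using finN by (intro card_mono) auto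
  also have "\<dots> \<le> card (N x)" using finN by (rule card_image_le)
  finally show ?thesis .
qed

end

locale SP2 = SP +
  assumes conn: "connected_graph G"
    and m2: "card (verts G) \<ge> 2"
    and h1: "6 * min_degree G + 2 < 3 * n * edge_connectivity G"
    and h2: "6 * min_degree G + 2 < 2 * (card (verts G) + 2 * num_edges G)"
begin

lemma lam_pos: "1 \<le> lam" using h1 by (cases "edge_connectivity G") auto

lemma Vne: "V \<noteq> {}" using m2 by auto

lemma N_ge_lam: assumes "x \<in> V" shows "lam \<le> card (N x)"
proof -
  obtain z where "z \<in> V" "z \<noteq> x"
  proof -
    have "\<not> V \<subseteq> {x}"
    proof
      assume "V \<subseteq> {x}" then have "card V \<le> card {x}" by (intro card_mono) auto
      then show False using m2 by simp
    qed
    then show ?thesis using that by blast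
  qed
  then have "lam \<le> card (CPG {x})" using lam_le[of "{x}" x z] assms by auto
  then show ?thesis using card_CPG_single order_trans by blast
qed

lemma delta_pos: "1 \<le> delta"
proof -
  obtain x where "x \<in> V" "card (N x) = delta" using delta_ex[OF Vne] by blast
  then show ?thesis using N_ge_lam[of x] lam_pos by linarith
qed

lemma m3: "3 \<le> card V"
proof (rule ccontr)
  assume "\<not> 3 \<le> card V"
  then have c2: "card V = 2" using m2 by simp
  then obtain a b where ab: "V = {a,b}" "a \<noteq> b" unfolding card_2_iff by blast
  have "E \<subseteq> {{a,b}}"
  proof
    fix e assume "e \<in> E"
    then obtain x y where "x \<noteq> y" "x \<in> V" "y \<in> V" "e = {x,y}" using sg unfolding simple_graph_def by blast
    then show "e \<in> {{a,b}}" using ab by (auto simp: insert_commute)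
  qed
  then have "card E \<le> card {{a,b}}" by (intro card_mono) auto
  then have "num_edges G \<le> 1" unfolding num_edges_def by simp
  then have "2 * (card V + 2 * num_edges G) \<le> 8" using c2 by simp
  then show False using h2 delta_pos by linarith
qed

end

context SP begin

definition VP where "VP = V \<times> {0..<n}"
definition CP where "CP X = {(u,v). u \<in> X \<and> v \<in> VP \<and> v \<notin> X \<and> padj u v}"

lemma finVP: "finite VP" unfolding VP_def using finV by simp

lemma finCP: "finite (CP X)"
proof -
  have "CP X \<subseteq> VP \<times> VP" unfolding CP_def VP_def padj_def by auto
  then show ?thesis by (rule finite_subset) (simp add: finVP)
qed

lemma CP_ge_sum:
  assumes "finite DD"
  shows "(\<Sum>D\<in>DD. card {p \<in> CP X. lab p = D}) \<le> card (CP X)"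
proof -
  have "(\<Sum>D\<in>DD. card {p \<in> CP X. lab p = D}) = card (\<Union>D\<in>DD. {p \<in> CP X. lab p = D})"
    using assms finCP by (subst card_UN_disjoint) auto
  also have "\<dots> \<le> card (CP X)" using finCP by (intro card_mono) auto
  finally show ?thesis .
qed

definition pr where "pr i = (if i = 0 then n - 1 else i - 1)"

lemma pr_lt: "i < n \<Longrightarrow> pr i < n" unfolding pr_def by auto
lemma sc_pr: "i < n \<Longrightarrow> sc (pr i) = i"
  using n3 unfolding pr_def by (auto simp: sc_eq)

lemma sc_mod: "sc (j mod n) = Suc j mod n"
  unfolding sc_def by (simp add: mod_Suc_eq)

lemma boundary:
  assumes a: "a < n" "a \<in> A" and b: "b < n" "b \<notin> A"
  shows "\<exists>i<n. i \<in> A \<and> sc i \<notin> A"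
proof (rule ccontr)
  assume "\<not> ?thesis"
  then have st: "\<And>i. i < n \<Longrightarrow> i \<in> A \<Longrightarrow> sc i \<in> A" by blast
  have "(a + k) mod n \<in> A" for k
  proof (induction k)
    case 0 then show ?case using a by simp
  next
    case (Suc k)
    have "(a + k) mod n < n" using n3 by simp
    then have "sc ((a + k) mod n) \<in> A" using st Suc by blast
    then show ?case by (simp add: sc_mod)
  qed
  from this[of "n - a + b"] have "(n + b) mod n \<in> A" using a by simp
  then show False using b by simp
qed

lemma boundary2:
  assumes a: "a < n" "a \<in> A" and b: "b < n" "b \<notin> A"
  shows "\<exists>i<n. i \<notin> A \<and> sc i \<in> A"
proof -
  have "b \<in> - A" "a \<notin> - A" using a b by auto
  from boundary[OF b(1) this(1) a(1) this(2)] show ?thesis by auto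
qed

definition colL :: "(('a \<times> nat) \<times> ('a \<times> nat)) \<Rightarrow> 'a set" where
  "colL p = {fst (fst p), fst (snd p)}"
definition rowL :: "(('a \<times> nat) \<times> ('a \<times> nat)) \<Rightarrow> nat set" where
  "rowL p = {snd (fst p), snd (snd p)}"

abbreviation "PC X D \<equiv> {p \<in> CP X. colL p = D}"

lemma finPC: "finite (PC X D)" using finCP by simp

lemma card_ge2: "p1 \<in> S \<Longrightarrow> p2 \<in> S \<Longrightarrow> p1 \<noteq> p2 \<Longrightarrow> finite S \<Longrightarrow> 2 \<le> card S"
proof -
  assume "p1 \<in> S" "p2 \<in> S" "p1 \<noteq> p2" "finite S"
  then have "card {p1,p2} \<le> card S" by (intro card_mono) auto
  then show ?thesis using \<open>p1 \<noteq> p2\<close> by simp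
qed

lemma card_ge3: "p1 \<in> S \<Longrightarrow> p2 \<in> S \<Longrightarrow> p3 \<in> S \<Longrightarrow> p1 \<noteq> p2 \<Longrightarrow> p1 \<noteq> p3 \<Longrightarrow> p2 \<noteq> p3
   \<Longrightarrow> finite S \<Longrightarrow> 3 \<le> card S"
proof -
  assume "p1 \<in> S" "p2 \<in> S" "p3 \<in> S" "p1 \<noteq> p2" "p1 \<noteq> p3" "p2 \<noteq> p3" "finite S"
  then have "card {p1,p2,p3} \<le> card S" by (intro card_mono) auto
  then show ?thesis using \<open>p1 \<noteq> p2\<close> \<open>p1 \<noteq> p3\<close> \<open>p2 \<noteq> p3\<close> by simp
qed

lemma pc_vert:
  assumes x: "x \<in> V" and a: "a < n" "(x,a) \<in> X" and b: "b < n" "(x,b) \<notin> X"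
  shows "2 \<le> card (PC X {x})"
proof -
  let ?A = "{i. (x,i) \<in> X}"
  have "\<exists>i<n. i \<in> ?A \<and> sc i \<notin> ?A" by (rule boundary) (use a b in auto)
  then obtain i where i: "i < n" "(x,i) \<in> X" "(x, sc i) \<notin> X" by auto
  have "\<exists>i<n. i \<notin> ?A \<and> sc i \<in> ?A" by (rule boundary2) (use a b in auto)
  then obtain j where j: "j < n" "(x,j) \<notin> X" "(x, sc j) \<in> X" by auto
  let ?p1 = "((x,i),(x,sc i))" and ?p2 = "((x, sc j),(x,j))"
  have "?p1 \<in> PC X {x}" using i x sc_lt[of i]
    unfolding CP_def VP_def colL_def padj_def by auto
  moreover have "?p2 \<in> PC X {x}" using j x sc_lt[of j]
    unfolding CP_def VP_def colL_def padj_def by auto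
  moreover have "?p1 \<noteq> ?p2"
  proof
    assume "?p1 = ?p2"
    then have "i = sc j" "sc i = j" by auto
    then show False using sc_sc_neq[OF j(1)] by simp
  qed
  ultimately show ?thesis by (rule card_ge2[OF _ _ _ finPC])
qed

definition W where "W j = {i. i < n \<and> (i = j \<or> i = sc j \<or> j = sc i)}"

definition zpt where "zpt z p = (if fst (fst p) = z then snd (fst p) else snd (snd p))"

lemma mixed_pair:
  assumes g: "gadj x z" and j: "j < n"
    and i1: "i1 \<in> W j" "(x,i1) \<in> X" and i2: "i2 \<in> W j" "(x,i2) \<notin> X"
  shows "\<exists>p \<in> PC X {x,z}. zpt z p = j"
proof -
  have xz: "x \<in> V" "z \<in> V" "x \<noteq> z" using gadjD[OF g] by auto
  have gz: "gadj z x" using g gadj_sym by simp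
  show ?thesis
  proof (cases "(z,j) \<in> X")
    case True
    let ?p = "((z,j),(x,i2))"
    have "padj (z,j) (x,i2)" using i2 j xz gz unfolding W_def padj_def by auto
    moreover have "colL ?p = {x,z}" unfolding colL_def by (simp add: insert_commute)
    moreover have "(x,i2) \<in> VP" using i2 xz unfolding VP_def W_def by simp
    ultimately have "?p \<in> PC X {x,z}" using True i2 unfolding CP_def by simp
    moreover have "zpt z ?p = j" unfolding zpt_def by simp
    ultimately show ?thesis by blast
  next
    case False
    let ?p = "((x,i1),(z,j))"
    have "padj (x,i1) (z,j)" using i1 j xz g unfolding W_def padj_def by auto
    moreover have "colL ?p = {x,z}" unfolding colL_def by simp
    moreover have "(z,j) \<in> VP" using j xz unfolding VP_def by simp
    ultimately have "?p \<in> PC X {x,z}" using False i1 unfolding CP_def by simp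
    moreover have "zpt z ?p = j" unfolding zpt_def using xz by simp
    ultimately show ?thesis by blast
  qed
qed

end

context SP begin

lemma W_self: "k < n \<Longrightarrow> k \<in> W k" unfolding W_def by simp
lemma W_sc: "k < n \<Longrightarrow> sc k \<in> W k" unfolding W_def using sc_lt by simp
lemma W_sc2: "k < n \<Longrightarrow> k \<in> W (sc k)" unfolding W_def by simp

lemma pc_band3:
  assumes g: "gadj x z" and a: "a < n" "(x,a) \<in> X" and b: "b < n" "(x,b) \<notin> X"
  shows "3 \<le> card (PC X {x,z})"
proof -
  let ?A = "{i. (x,i) \<in> X}"
  have "\<exists>i<n. i \<in> ?A \<and> sc i \<notin> ?A" by (rule boundary) (use a b in auto)
  then obtain i where i: "i < n" "(x,i) \<in> X" "(x, sc i) \<notin> X" by auto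
  have "\<exists>i<n. i \<notin> ?A \<and> sc i \<in> ?A" by (rule boundary2) (use a b in auto)
  then obtain j where j: "j < n" "(x,j) \<notin> X" "(x, sc j) \<in> X" by auto
  have si: "sc i < n" "sc j < n" using sc_lt by auto
  obtain p1 where p1: "p1 \<in> PC X {x,z}" "zpt z p1 = i"
    using mixed_pair[OF g i(1) W_self[OF i(1)] i(2) W_sc[OF i(1)] i(3)] by blast
  obtain p2 where p2: "p2 \<in> PC X {x,z}" "zpt z p2 = sc i"
    using mixed_pair[OF g si(1) W_sc2[OF i(1)] i(2) W_self[OF si(1)] i(3)] by blast
  obtain p3 where p3: "p3 \<in> PC X {x,z}" "zpt z p3 = j"
    using mixed_pair[OF g j(1) W_sc[OF j(1)] j(3) W_self[OF j(1)] j(2)] by blast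
  obtain p4 where p4: "p4 \<in> PC X {x,z}" "zpt z p4 = sc j"
    using mixed_pair[OF g si(2) W_self[OF si(2)] j(3) W_sc2[OF j(1)] j(2)] by blast
  have ij: "i \<noteq> j" using i j by auto
  have n1: "i \<noteq> sc i" using sc_neq[OF i(1)] by simp
  have n2: "j \<noteq> sc j" using sc_neq[OF j(1)] by simp
  show ?thesis
  proof (cases "sc i = j")
    case False
    then have "p1 \<noteq> p2" "p1 \<noteq> p3" "p2 \<noteq> p3" using p1 p2 p3 ij n1 by metis+
    then show ?thesis by (rule card_ge3[OF p1(1) p2(1) p3(1) _ _ _ finPC])
  next
    case True
    then have "i \<noteq> sc j" using sc_sc_neq[OF i(1)] by simp
    then have "p1 \<noteq> p3" "p1 \<noteq> p4" "p3 \<noteq> p4" using p1 p3 p4 ij n2 by metis+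
    then show ?thesis by (rule card_ge3[OF p1(1) p3(1) p4(1) _ _ _ finPC])
  qed
qed

lemma sc_pr_neq: "i < n \<Longrightarrow> pr i \<noteq> i" using sc_pr sc_neq pr_lt by metis
lemma sc_pr_neq2: "i < n \<Longrightarrow> pr i \<noteq> sc i"
proof
  assume i: "i < n" and e: "pr i = sc i"
  then have "sc (sc i) = i" using sc_pr by metis
  then show False using sc_sc_neq[OF i] by simp
qed

definition wk where "wk k i = (if k = (0::nat) then i else if k = 1 then sc i else pr i)"

lemma pc_full:
  assumes g: "gadj x z" and full: "\<forall>j<n. (z,j) \<in> X"
  shows "3 * card {i. i < n \<and> (x,i) \<notin> X} \<le> card (PC X {x,z})"
proof -
  let ?Q = "{i. i < n \<and> (x,i) \<notin> X}"
  have xz: "x \<in> V" "z \<in> V" "x \<noteq> z" using gadjD[OF g] by auto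
  have gz: "gadj z x" using g gadj_sym by simp
  let ?f = "\<lambda>(i,k). ((z, wk k i), (x,i))"
  have wlt: "wk k i < n" if "i < n" for i k using that sc_lt pr_lt unfolding wk_def by auto
  have sub: "?f ` (?Q \<times> {0,1,2}) \<subseteq> PC X {x,z}"
  proof
    fix p assume "p \<in> ?f ` (?Q \<times> {0,1,2})"
    then obtain i k where ik: "i < n" "(x,i) \<notin> X" "k \<in> {0,1,2}" "p = ((z, wk k i), (x,i))" by auto
    have "padj (z, wk k i) (x,i)"
    proof -
      have "wk k i = i \<or> i = sc (wk k i) \<or> wk k i = sc i"
        using ik sc_pr unfolding wk_def by auto
      then show ?thesis using ik xz gz wlt[OF ik(1)] unfolding padj_def by auto
    qed
    moreover have "(z, wk k i) \<in> X" using full wlt[OF ik(1)] by simp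
    moreover have "(x,i) \<in> VP" using ik xz unfolding VP_def by simp
    moreover have "colL p = {x,z}" using ik unfolding colL_def by (simp add: insert_commute)
    ultimately show "p \<in> PC X {x,z}" using ik unfolding CP_def by simp
  qed
  have inj: "inj_on ?f (?Q \<times> {0,1,2})"
  proof (rule inj_onI)
    fix a b assume a: "a \<in> ?Q \<times> {0,1,2}" and b: "b \<in> ?Q \<times> {0,1,2}" and e: "?f a = ?f b"
    obtain i k where ak: "a = (i,k)" by (cases a)
    obtain i' k' where bk: "b = (i',k')" by (cases b)
    have ii: "i = i'" and ww: "wk k i = wk k' i" using e ak bk by auto
    have "i < n" using a ak by simp
    then have d: "sc i \<noteq> i" "i \<noteq> sc i" "pr i \<noteq> i" "i \<noteq> pr i" "pr i \<noteq> sc i" "sc i \<noteq> pr i"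
      using sc_neq sc_pr_neq sc_pr_neq2 by metis+
    have "k = k'" using ww a b ak bk d unfolding wk_def
      by (auto split: if_splits)
    then show "a = b" using ak bk ii by simp
  qed
  have fQ: "finite ?Q" by simp
  have "3 * card ?Q = card (?Q \<times> {0::nat,1,2})" by (simp add: card_cartesian_product)
  also have "\<dots> = card (?f ` (?Q \<times> {0,1,2}))" using card_image[OF inj] by simp
  also have "\<dots> \<le> card (PC X {x,z})" using sub finPC by (rule card_mono[rotated])
  finally show ?thesis .
qed

end

context SP begin

abbreviation "RP X D \<equiv> {p \<in> CP X. rowL p = D}"

lemma finRP: "finite (RP X D)" using finCP by simp

lemma sum_ge: "(\<And>i. i \<in> A \<Longrightarrow> K \<le> f i) \<Longrightarrow> card A * K \<le> sum f A" for K :: nat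
  using sum_bounded_below[of A K f] by simp

lemma inj_img_card_le:
  assumes "inj_on h A" "h ` A \<subseteq> S" "finite S"
  shows "card A \<le> card S"
proof -
  have "card A = card (h ` A)" using assms(1) by (simp add: card_image)
  also have "\<dots> \<le> card S" using assms(2,3) by (rule card_mono[rotated])
  finally show ?thesis .
qed

end

context SP2 begin

lemma row_single:
  assumes y: "y < n" and f: "f \<in> V" "(f,y) \<in> X" and g: "g \<in> V" "(g,y) \<notin> X"
  shows "lam \<le> card (RP X {y})"
proof -
  let ?B = "{x \<in> V. (x,y) \<in> X}"
  have "lam \<le> card (CPG ?B)" by (rule lam_le[of ?B f g]) (use f g in auto)
  also have "card (CPG ?B) \<le> card (RP X {y})"
  proof (rule inj_img_card_le[of "\<lambda>(x,z). ((x,y),(z,y))"])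
    show "inj_on (\<lambda>(x,z). ((x,y),(z,y))) (CPG ?B)" unfolding inj_on_def by auto
    show "(\<lambda>(x,z). ((x,y),(z,y))) ` CPG ?B \<subseteq> RP X {y}"
    proof
      fix p assume "p \<in> (\<lambda>(x,z). ((x,y),(z,y))) ` CPG ?B"
      then obtain x z where xz: "x \<in> V" "(x,y) \<in> X" "z \<in> V" "(z,y) \<notin> X" "gadj x z"
        "p = ((x,y),(z,y))" unfolding CPG_def by auto
      have "padj (x,y) (z,y)" using xz y unfolding padj_def by simp
      moreover have "(z,y) \<in> VP" using xz y unfolding VP_def by simp
      ultimately show "p \<in> RP X {y}" using xz unfolding CP_def rowL_def by simp
    qed
    show "finite (RP X {y})" by (rule finRP)
  qed
  finally show ?thesis .
qed

lemma row_pair: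
  assumes y: "y < n" and f: "f \<in> V" "(f,y) \<in> X" "(f, sc y) \<in> X"
    and g: "g \<in> V" "(g,y) \<notin> X" "(g, sc y) \<notin> X"
  shows "2 * lam \<le> card (RP X {y, sc y})"
proof -
  define y' where "y' = sc y"
  have y': "y' < n" "y' \<noteq> y" using sc_lt sc_neq[OF y] unfolding y'_def by auto
  let ?L = "{x \<in> V. (x,y) \<in> X \<and> (x,y') \<in> X}"
  let ?U = "{x \<in> V. (x,y) \<in> X \<or> (x,y') \<in> X}"
  define gL where "gL = (\<lambda>(x::'a,z::'a). if (z,y') \<notin> X then ((x,y),(z,y')) else ((x,y'),(z,y)))"
  define gU where "gU = (\<lambda>(x::'a,z::'a). if (x,y') \<in> X then ((x,y'),(z,y)) else ((x,y),(z,y')))"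
  have lL: "lam \<le> card (CPG ?L)" by (rule lam_le[of ?L f g]) (use f g y'_def in auto)
  have lU: "lam \<le> card (CPG ?U)" by (rule lam_le[of ?U f g]) (use f g y'_def in auto)
  have fstL: "fst (fst (gL q)) = fst q \<and> fst (snd (gL q)) = snd q" for q
    unfolding gL_def by (cases q) auto
  have fstU: "fst (fst (gU q)) = fst q \<and> fst (snd (gU q)) = snd q" for q
    unfolding gU_def by (cases q) auto
  have injL: "inj_on gL (CPG ?L)"
    by (rule inj_onI) (metis fstL prod.collapse)
  have injU: "inj_on gU (CPG ?U)"
    by (rule inj_onI) (metis fstU prod.collapse)
  have padj_d: "padj (x,y) (z,y')" "padj (x,y') (z,y)" if "gadj x z" for x z
    using that gadjD[OF that] y y' unfolding padj_def y'_def by auto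
  have subL: "gL ` CPG ?L \<subseteq> RP X {y, y'}"
  proof
    fix p assume "p \<in> gL ` CPG ?L"
    then obtain x z where xz: "x \<in> V" "(x,y) \<in> X" "(x,y') \<in> X" "z \<in> V"
      "\<not> ((z,y) \<in> X \<and> (z,y') \<in> X)" "gadj x z" "p = gL (x,z)"
      unfolding CPG_def by auto
    show "p \<in> RP X {y, y'}"
    proof (cases "(z,y') \<notin> X")
      case True
      then have "p = ((x,y),(z,y'))" using xz unfolding gL_def by simp
      moreover have "(z,y') \<in> VP" using xz y' unfolding VP_def by simp
      ultimately show ?thesis using xz True padj_d[OF xz(6)] unfolding CP_def rowL_def by simp
    next
      case False
      then have "p = ((x,y'),(z,y))" using xz unfolding gL_def by simp
      moreover have "(z,y) \<in> VP" using xz y unfolding VP_def by simp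
      moreover have "(z,y) \<notin> X" using xz False by simp
      ultimately show ?thesis using xz padj_d[OF xz(6)] unfolding CP_def rowL_def
        by (simp add: insert_commute)
    qed
  qed
  have subU: "gU ` CPG ?U \<subseteq> RP X {y, y'}"
  proof
    fix p assume "p \<in> gU ` CPG ?U"
    then obtain x z where xz: "x \<in> V" "(x,y) \<in> X \<or> (x,y') \<in> X" "z \<in> V"
      "(z,y) \<notin> X" "(z,y') \<notin> X" "gadj x z" "p = gU (x,z)"
      unfolding CPG_def by auto
    show "p \<in> RP X {y, y'}"
    proof (cases "(x,y') \<in> X")
      case True
      then have "p = ((x,y'),(z,y))" using xz unfolding gU_def by simp
      moreover have "(z,y) \<in> VP" using xz y unfolding VP_def by simp
      ultimately show ?thesis using xz True padj_d[OF xz(6)] unfolding CP_def rowL_def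
        by (simp add: insert_commute)
    next
      case False
      then have "p = ((x,y),(z,y'))" using xz unfolding gU_def by simp
      moreover have "(z,y') \<in> VP" using xz y' unfolding VP_def by simp
      moreover have "(x,y) \<in> X" using xz False by simp
      ultimately show ?thesis using xz padj_d[OF xz(6)] unfolding CP_def rowL_def by simp
    qed
  qed
  have disj: "gL ` CPG ?L \<inter> gU ` CPG ?U = {}"
  proof (rule ccontr)
    assume "gL ` CPG ?L \<inter> gU ` CPG ?U \<noteq> {}"
    then obtain q q' where q: "q \<in> CPG ?L" "q' \<in> CPG ?U" "gL q = gU q'" by blast
    then have "q = q'" using fstL[of q] fstU[of q'] by (metis prod.collapse)
    obtain x z where xz: "q = (x,z)" by (cases q)
    have A: "(x,y) \<in> X" "(x,y') \<in> X" "(z,y) \<notin> X" "(z,y') \<notin> X"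
      using q xz \<open>q = q'\<close> unfolding CPG_def by auto
    have "gL q = ((x,y),(z,y'))" using A xz unfolding gL_def by simp
    moreover have "gU q = ((x,y'),(z,y))" using A xz unfolding gU_def by simp
    ultimately show False using q(3) \<open>q = q'\<close> y'(2) by simp
  qed
  have "2 * lam \<le> card (CPG ?L) + card (CPG ?U)" using lL lU by simp
  also have "\<dots> = card (gL ` CPG ?L) + card (gU ` CPG ?U)"
    using injL injU by (simp add: card_image)
  also have "\<dots> = card (gL ` CPG ?L \<union> gU ` CPG ?U)"
    using disj finCPG by (simp add: card_Un_disjoint)
  also have "\<dots> \<le> card (RP X {y, y'})" using subL subU finRP by (intro card_mono) auto
  finally show ?thesis unfolding y'_def .
qed

lemma caseA:
  assumes f: "f \<in> V" "\<forall>j<n. (f,j) \<in> X" and g: "g \<in> V" "\<forall>j<n. (g,j) \<notin> X"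
  shows "3 * n * lam \<le> card (CP X)"
proof -
  let ?D1 = "(\<lambda>y. {y}) ` {0..<n}"
  let ?D2 = "(\<lambda>y. {y, sc y}) ` {0..<n}"
  have inj1: "inj_on (\<lambda>y. {y}) {0..<n}" unfolding inj_on_def by simp
  have inj2: "inj_on (\<lambda>y. {y, sc y}) {0..<n}"
  proof (rule inj_onI)
    fix a b assume a: "a \<in> {0..<n}" and b: "b \<in> {0..<n}" and e: "{a, sc a} = {b, sc b}"
    show "a = b"
    proof (rule ccontr)
      assume "a \<noteq> b"
      then have "a = sc b" "sc a = b" using e by (auto simp: doubleton_eq_iff)
      then show False using sc_sc_neq[of b] b by simp
    qed
  qed
  have disj: "?D1 \<inter> ?D2 = {}"
  proof (rule ccontr)
    assume "?D1 \<inter> ?D2 \<noteq> {}"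
    then obtain a b where "a < n" "b < n" "{a} = {b, sc b}" by auto
    then show False using sc_neq[of b] by (auto simp: doubleton_eq_iff)
  qed
  have s1: "n * lam \<le> (\<Sum>D\<in>?D1. card (RP X D))"
  proof -
    have "(\<Sum>D\<in>?D1. card (RP X D)) = (\<Sum>y\<in>{0..<n}. card (RP X {y}))"
      using inj1 by (simp add: sum.reindex)
    moreover have "card {0..<n} * lam \<le> (\<Sum>y\<in>{0..<n}. card (RP X {y}))"
      by (rule sum_ge) (use row_single f g in auto)
    ultimately show ?thesis by simp
  qed
  have s2: "n * (2 * lam) \<le> (\<Sum>D\<in>?D2. card (RP X D))"
  proof -
    have "(\<Sum>D\<in>?D2. card (RP X D)) = (\<Sum>y\<in>{0..<n}. card (RP X {y, sc y}))"
      using inj2 by (simp add: sum.reindex)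
    moreover have "card {0..<n} * (2 * lam) \<le> (\<Sum>y\<in>{0..<n}. card (RP X {y, sc y}))"
      by (rule sum_ge) (use row_pair f g sc_lt in auto)
    ultimately show ?thesis by simp
  qed
  have "(\<Sum>D\<in>?D1 \<union> ?D2. card (RP X D)) = (\<Sum>D\<in>?D1. card (RP X D)) + (\<Sum>D\<in>?D2. card (RP X D))"
    using disj by (intro sum.union_disjoint) auto
  moreover have "(\<Sum>D\<in>?D1 \<union> ?D2. card (RP X D)) \<le> card (CP X)"
    by (rule CP_ge_sum) simp
  ultimately show ?thesis using s1 s2 by simp
qed

end

context SP begin

definition F where "F x Z = (\<lambda>z. {x,z}) ` Z"

lemma inj_pair: "inj_on (\<lambda>z. {x,z}) Z"
  unfolding inj_on_def by (auto simp: doubleton_eq_iff)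

lemma sum_F: "(\<Sum>D\<in>F x Z. h D) = (\<Sum>z\<in>Z. h {x,z})"
  unfolding F_def by (simp add: sum.reindex[OF inj_pair])

lemma finF: "finite Z \<Longrightarrow> finite (F x Z)" unfolding F_def by simp

lemma F_disj: "x \<noteq> x' \<Longrightarrow> x' \<notin> Z \<or> x \<notin> Z' \<Longrightarrow> F x Z \<inter> F x' Z' = {}"
  unfolding F_def by (auto simp: doubleton_eq_iff)

lemma F_sing: "Z \<subseteq> N x \<Longrightarrow> {a} \<notin> F x Z"
proof
  assume Z: "Z \<subseteq> N x" and "{a} \<in> F x Z"
  then obtain z where "z \<in> Z" "{a} = {x,z}" unfolding F_def by auto
  then have "z = x" by (metis insert_subset singleton_insert_inj_eq subset_insertI doubleton_eq_iff)
  then show False using \<open>z \<in> Z\<close> Z x_notin_N by blast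
qed

lemma F_pair_notin: "Z \<subseteq> N x - {x'} \<Longrightarrow> {x,x'} \<notin> F x Z"
  unfolding F_def by (auto simp: doubleton_eq_iff)

lemma band_sum:
  assumes "Z \<subseteq> N x" "a < n" "(x,a) \<in> X" "b < n" "(x,b) \<notin> X"
  shows "3 * card Z \<le> (\<Sum>D\<in>F x Z. card (PC X D))"
proof -
  have "card Z * 3 \<le> (\<Sum>z\<in>Z. card (PC X {x,z}))"
  proof (rule sum_ge)
    fix z assume "z \<in> Z"
    then have "gadj x z" using assms(1) unfolding N_def by auto
    then show "3 \<le> card (PC X {x,z})" using pc_band3 assms(2-5) by blast
  qed
  then show ?thesis by (simp add: sum_F mult.commute)
qed

lemma full_sum:
  assumes "Z \<subseteq> N x" "\<And>z. z \<in> Z \<Longrightarrow> \<forall>j<n. (z,j) \<in> X"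
  shows "3 * card {i. i < n \<and> (x,i) \<notin> X} * card Z \<le> (\<Sum>D\<in>F x Z. card (PC X D))"
proof -
  have "card Z * (3 * card {i. i < n \<and> (x,i) \<notin> X}) \<le> (\<Sum>z\<in>Z. card (PC X {x,z}))"
  proof (rule sum_ge)
    fix z assume "z \<in> Z"
    then have "gadj x z" using assms(1) unfolding N_def by auto
    then show "3 * card {i. i < n \<and> (x,i) \<notin> X} \<le> card (PC X {x,z})"
      using pc_full assms(2) \<open>z \<in> Z\<close> by blast
  qed
  then show ?thesis by (simp add: sum_F mult.commute)
qed

end

context SP2 begin

lemma deg_pair3:
  assumes g: "gadj x1 x2"
  shows "3 \<le> card (N x1) + card (N x2)"
proof (rule ccontr)
  assume a: "\<not> ?thesis"
  have x: "x1 \<in> V" "x2 \<in> V" "x1 \<noteq> x2" using gadjD[OF g] by auto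
  have i1: "x2 \<in> N x1" and i2: "x1 \<in> N x2" using g gadj_sym unfolding N_def by auto
  have c1: "1 \<le> card (N x1)" "1 \<le> card (N x2)"
    using i1 i2 finN[of x1] finN[of x2] by (auto simp: Suc_le_eq card_gt_0_iff)
  have "card (N x1) = 1" "card (N x2) = 1" using a c1 by auto
  then have N1: "N x1 = {x2}" and N2: "N x2 = {x1}" using i1 i2 by (auto simp: card_1_singleton_iff)
  have "\<not> V \<subseteq> {x1,x2}"
  proof
    assume "V \<subseteq> {x1,x2}"
    then have "card V \<le> card {x1,x2}" by (intro card_mono) auto
    moreover have "card {x1,x2} \<le> 2" by (simp add: card_insert_if)
    ultimately show False using m3 by linarith
  qed
  then obtain z where z: "z \<in> V" "z \<notin> {x1,x2}" by blast
  have "lam \<le> card (CPG {x1,x2})" by (rule lam_le[of _ x1 z]) (use x z in auto)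
  moreover have "CPG {x1,x2} = {}"
  proof -
    have "False" if "(a,b) \<in> CPG {x1,x2}" for a b
    proof -
      from that have "a \<in> {x1,x2}" "b \<notin> {x1,x2}" "gadj a b" unfolding CPG_def by auto
      then have "b \<in> N a" unfolding N_def by simp
      then show False using N1 N2 \<open>a \<in> {x1,x2}\<close> \<open>b \<notin> {x1,x2}\<close> by auto
    qed
    then show ?thesis by auto
  qed
  ultimately show False using lam_pos by simp
qed

end


locale SPB = SP2 +
  fixes X
  assumes XV: "X \<subseteq> VP" and noempty: "\<forall>x\<in>V. \<exists>i<n. (x,i) \<in> X"
    and Y3: "3 \<le> card (VP - X)"
begin

definition T where "T = {x \<in> V. \<exists>i<n. (x,i) \<notin> X}"
definition Q where "Q x = {i. i < n \<and> (x,i) \<notin> X}"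
definition wt where "wt D = card (PC X D)"

lemma wt_sum: "finite DD \<Longrightarrow> sum wt DD \<le> card (CP X)"
  unfolding wt_def by (rule CP_ge_sum)

lemma T_sub: "T \<subseteq> V" unfolding T_def by auto
lemma finT: "finite T" using finite_subset[OF T_sub finV] .

lemma splitT: assumes "x \<in> T" obtains a b where "a < n" "(x,a) \<in> X" "b < n" "(x,b) \<notin> X"
  using assms noempty unfolding T_def by blast

lemma fullT: "x \<in> V \<Longrightarrow> x \<notin> T \<Longrightarrow> \<forall>j<n. (x,j) \<in> X"
  unfolding T_def by auto

lemma vsing: assumes "x \<in> T" shows "2 \<le> wt {x}"
proof -
  obtain a b where "a < n" "(x,a) \<in> X" "b < n" "(x,b) \<notin> X" using splitT[OF assms] .
  then show ?thesis unfolding wt_def using pc_vert T_sub assms by blast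
qed

lemma bsum: assumes "x \<in> T" "Z \<subseteq> N x" shows "3 * card Z \<le> sum wt (F x Z)"
proof -
  obtain a b where "a < n" "(x,a) \<in> X" "b < n" "(x,b) \<notin> X" using splitT[OF assms(1)] .
  then show ?thesis unfolding wt_def using band_sum assms(2) by blast
qed

lemma fsum: assumes "Z \<subseteq> N x" "Z \<inter> T = {}" shows "3 * card (Q x) * card Z \<le> sum wt (F x Z)"
proof -
  have "\<forall>j<n. (z,j) \<in> X" if "z \<in> Z" for z
    using that assms fullT N_sub by blast
  then show ?thesis unfolding wt_def Q_def using full_sum[OF assms(1)] by blast
qed

lemma YQ: "card (VP - X) \<le> (\<Sum>x\<in>T. card (Q x))"
proof -
  have "VP - X \<subseteq> Sigma T Q" unfolding VP_def T_def Q_def by auto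
  then have "card (VP - X) \<le> card (Sigma T Q)"
    by (intro card_mono) (auto simp: finT Q_def)
  also have "\<dots> = (\<Sum>x\<in>T. card (Q x))" by (rule card_SigmaI) (auto simp: finT Q_def)
  finally show ?thesis .
qed

lemma T_ne: "T \<noteq> {}"
proof
  assume "T = {}"
  then have "card (VP - X) \<le> 0" using YQ by simp
  then show False using Y3 by simp
qed

lemma degs: "x \<in> V \<Longrightarrow> delta \<le> card (N x)" by (rule delta_le)

lemma finNd: "finite (N x - A)" using finN by simp

lemma B1:
  assumes T1: "T = {x}"
  shows "6 * delta + 3 \<le> card (CP X)"
proof -
  have x: "x \<in> T" "x \<in> V" using T1 T_sub by auto
  have q: "3 \<le> card (Q x)" using YQ Y3 T1 by simp
  have "N x \<inter> T = {}" using T1 x_notin_N by auto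
  then have "3 * card (Q x) * card (N x) \<le> sum wt (F x (N x))" using fsum by simp
  moreover have "9 * card (N x) \<le> 3 * card (Q x) * card (N x)"
    using mult_le_mono1[of 9 "3 * card (Q x)" "card (N x)"] q by simp
  moreover have "sum wt (F x (N x)) \<le> card (CP X)" by (rule wt_sum) (simp add: finF finN)
  moreover have "delta \<le> card (N x)" using degs x by simp
  ultimately show ?thesis using delta_pos by linarith
qed

lemma B2:
  assumes x: "x1 \<in> T" "x2 \<in> T" "x1 \<noteq> x2" "\<not> gadj x1 x2"
  shows "6 * delta + 3 \<le> card (CP X)"
proof -
  let ?F1 = "F x1 (N x1)" and ?F2 = "F x2 (N x2)"
  have f: "finite ?F1" "finite ?F2" by (simp_all add: finF finN)
  have d12: "?F1 \<inter> ?F2 = {}" by (rule F_disj) (use x in \<open>auto simp: N_def\<close>)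
  have ds: "{{x1},{x2}} \<inter> (?F1 \<union> ?F2) = {}" using F_sing[of "N x1" x1] F_sing[of "N x2" x2] by auto
  have "sum wt ({{x1},{x2}} \<union> (?F1 \<union> ?F2)) = sum wt {{x1},{x2}} + sum wt (?F1 \<union> ?F2)"
    by (rule sum.union_disjoint) (use f ds in auto)
  also have "sum wt (?F1 \<union> ?F2) = sum wt ?F1 + sum wt ?F2"
    by (rule sum.union_disjoint) (use f d12 in auto)
  also have "sum wt {{x1},{x2}} = wt {x1} + wt {x2}" using x by simp
  finally have e: "sum wt ({{x1},{x2}} \<union> (?F1 \<union> ?F2)) = wt {x1} + wt {x2} + sum wt ?F1 + sum wt ?F2"
    by simp
  have "sum wt ({{x1},{x2}} \<union> (?F1 \<union> ?F2)) \<le> card (CP X)" by (rule wt_sum) (use f in simp)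
  moreover have "2 \<le> wt {x1}" "2 \<le> wt {x2}" using vsing x by auto
  moreover have "3 * card (N x1) \<le> sum wt ?F1" "3 * card (N x2) \<le> sum wt ?F2"
    using bsum x by auto
  moreover have "delta \<le> card (N x1)" "delta \<le> card (N x2)" using degs x T_sub by auto
  ultimately show ?thesis using e by linarith
qed

lemma B3:
  assumes x: "x1 \<in> T" "x2 \<in> T" "x3 \<in> T" "x1 \<noteq> x2" "x1 \<noteq> x3" "x2 \<noteq> x3"
    and g: "gadj x1 x2" "gadj x1 x3" "gadj x2 x3"
  shows "6 * delta + 3 \<le> card (CP X)"
proof -
  let ?F1 = "F x1 (N x1)" and ?F2 = "F x2 (N x2 - {x1})" and ?F3 = "F x3 (N x3 - {x1,x2})"
  let ?S = "{{x1},{x2},{x3}}"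
  have f: "finite ?F1" "finite ?F2" "finite ?F3" by (simp_all add: finF finN)
  have d12: "?F1 \<inter> ?F2 = {}" by (rule F_disj) (use x in auto)
  have d13: "?F1 \<inter> ?F3 = {}" by (rule F_disj) (use x in auto)
  have d23: "?F2 \<inter> ?F3 = {}" by (rule F_disj) (use x in auto)
  have ds: "?S \<inter> (?F1 \<union> (?F2 \<union> ?F3)) = {}"
    using F_sing[of "N x1" x1] F_sing[of "N x2 - {x1}" x2] F_sing[of "N x3 - {x1,x2}" x3] by auto
  have "sum wt (?S \<union> (?F1 \<union> (?F2 \<union> ?F3))) = sum wt ?S + sum wt (?F1 \<union> (?F2 \<union> ?F3))"
    by (rule sum.union_disjoint) (use f ds in auto)
  also have "sum wt (?F1 \<union> (?F2 \<union> ?F3)) = sum wt ?F1 + sum wt (?F2 \<union> ?F3)"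
    by (rule sum.union_disjoint) (use f d12 d13 in auto)
  also have "sum wt (?F2 \<union> ?F3) = sum wt ?F2 + sum wt ?F3"
    by (rule sum.union_disjoint) (use f d23 in auto)
  also have "sum wt ?S = wt {x1} + wt {x2} + wt {x3}" using x by simp
  finally have e: "sum wt (?S \<union> (?F1 \<union> (?F2 \<union> ?F3))) = wt {x1} + wt {x2} + wt {x3} + sum wt ?F1 + sum wt ?F2 + sum wt ?F3"
    by simp
  have "sum wt (?S \<union> (?F1 \<union> (?F2 \<union> ?F3))) \<le> card (CP X)" by (rule wt_sum) (use f in simp)
  moreover have "2 \<le> wt {x1}" "2 \<le> wt {x2}" "2 \<le> wt {x3}" using vsing x by auto
  moreover have "3 * card (N x1) \<le> sum wt ?F1" "3 * card (N x2 - {x1}) \<le> sum wt ?F2"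
      "3 * card (N x3 - {x1,x2}) \<le> sum wt ?F3"
    using bsum x by auto
  moreover have "delta \<le> card (N x1)" "delta \<le> card (N x2)" "delta \<le> card (N x3)" using degs x T_sub by auto
  moreover have in1: "x2 \<in> N x1" "x3 \<in> N x1" "x1 \<in> N x2" "x1 \<in> N x3" "x2 \<in> N x3"
    using g gadj_sym unfolding N_def by auto
  moreover have "card (N x2 - {x1}) + 1 = card (N x2)"
    using card.remove[OF finN in1(3)] by simp
  moreover have "card (N x3 - {x1,x2}) + 2 = card (N x3)"
  proof -
    have "card (N x3 - {x1,x2}) = card (N x3) - card {x1,x2}"
      using in1 finN by (intro card_Diff_subset) auto
    moreover have "card {x1,x2} = 2" using x by simp
    moreover have "card {x1,x2} \<le> card (N x3)" using in1 finN by (intro card_mono) auto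
    ultimately show ?thesis by simp
  qed
  moreover have "card {x2,x3} \<le> card (N x1)" using in1 finN by (intro card_mono) auto
  moreover have "card {x2,x3} = 2" using x by simp
  ultimately show ?thesis using e by (cases "delta \<le> 2") linarith+
qed

lemma B4:
  assumes T2: "T = {x1,x2}" and x: "x1 \<noteq> x2" and g: "gadj x1 x2"
  shows "6 * delta + 3 \<le> card (CP X)"
proof -
  have xT: "x1 \<in> T" "x2 \<in> T" using T2 by auto
  let ?F1 = "F x1 (N x1 - {x2})" and ?F2 = "F x2 (N x2 - {x1})"
  let ?S = "{{x1},{x2},{x1,x2}}"
  have f: "finite ?F1" "finite ?F2" by (simp_all add: finF finN)
  have d12: "?F1 \<inter> ?F2 = {}" by (rule F_disj) (use x in auto)
  have ds: "?S \<inter> (?F1 \<union> ?F2) = {}"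
    using F_sing[of "N x1 - {x2}" x1] F_sing[of "N x2 - {x1}" x2]
      F_pair_notin[of "N x1 - {x2}" x1 x2] F_pair_notin[of "N x2 - {x1}" x2 x1]
    by (auto simp: insert_commute)
  have "sum wt (?S \<union> (?F1 \<union> ?F2)) = sum wt ?S + sum wt (?F1 \<union> ?F2)"
    by (rule sum.union_disjoint) (use f ds in auto)
  also have "sum wt (?F1 \<union> ?F2) = sum wt ?F1 + sum wt ?F2"
    by (rule sum.union_disjoint) (use f d12 in auto)
  also have "sum wt ?S = wt {x1} + wt {x2} + wt {x1,x2}" using x by (simp add: doubleton_eq_iff)
  finally have e: "sum wt (?S \<union> (?F1 \<union> ?F2)) = wt {x1} + wt {x2} + wt {x1,x2} + sum wt ?F1 + sum wt ?F2"
    by simp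
  have tot: "sum wt (?S \<union> (?F1 \<union> ?F2)) \<le> card (CP X)" by (rule wt_sum) (use f in simp)
  have v: "2 \<le> wt {x1}" "2 \<le> wt {x2}" using vsing xT by auto
  have b: "3 \<le> wt {x1,x2}"
  proof -
    obtain a b where "a < n" "(x1,a) \<in> X" "b < n" "(x1,b) \<notin> X" using splitT[OF xT(1)] .
    then show ?thesis unfolding wt_def using pc_band3 g by blast
  qed
  define q1 where "q1 = card (Q x1)"
  define q2 where "q2 = card (Q x2)"
  define a1 where "a1 = card (N x1 - {x2})"
  define a2 where "a2 = card (N x2 - {x1})"
  have fs1: "3 * q1 * a1 \<le> sum wt ?F1" unfolding q1_def a1_def
    by (rule fsum) (use T2 x_notin_N in auto)
  have fs2: "3 * q2 * a2 \<le> sum wt ?F2" unfolding q2_def a2_def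
    by (rule fsum) (use T2 x_notin_N in auto)
  have qq: "3 \<le> q1 + q2" using YQ Y3 T2 x unfolding q1_def q2_def by simp
  have q1p: "1 \<le> q1"
  proof -
    obtain a b where "b < n" "(x1,b) \<notin> X" using splitT[OF xT(1)] by metis
    then have "Q x1 \<noteq> {}" unfolding Q_def by auto
    then show ?thesis unfolding q1_def Q_def by (simp add: Suc_le_eq card_gt_0_iff)
  qed
  have q2p: "1 \<le> q2"
  proof -
    obtain a b where "b < n" "(x2,b) \<notin> X" using splitT[OF xT(2)] by metis
    then have "Q x2 \<noteq> {}" unfolding Q_def by auto
    then show ?thesis unfolding q2_def Q_def by (simp add: Suc_le_eq card_gt_0_iff)
  qed
  have in1: "x2 \<in> N x1" "x1 \<in> N x2" using g gadj_sym unfolding N_def by auto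
  have a1e: "a1 + 1 = card (N x1)" unfolding a1_def using card.remove[OF finN in1(1)] by simp
  have a2e: "a2 + 1 = card (N x2)" unfolding a2_def using card.remove[OF finN in1(2)] by simp
  have dd: "3 \<le> card (N x1) + card (N x2)" by (rule deg_pair3[OF g])
  have de: "delta \<le> card (N x1)" "delta \<le> card (N x2)" using degs xT T_sub by auto
  have m1: "a1 \<le> q1 * a1" "a2 \<le> q2 * a2" using q1p q2p by simp_all
  have "2 * delta \<le> q1 * a1 + q2 * a2 + 1"
  proof (cases "delta \<le> 1")
    case True then show ?thesis using m1 dd a1e a2e by linarith
  next
    case False
    define e where "e = delta - 1"
    have ee: "delta = e + 1" using False unfolding e_def by simp
    have "q1 * e \<le> q1 * a1" using de a1e ee by (intro mult_le_mono2) linarith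
    moreover have "q2 * e \<le> q2 * a2" using de a2e ee by (intro mult_le_mono2) linarith
    moreover have "3 * e \<le> (q1 + q2) * e" using qq by (rule mult_le_mono1)
    moreover have "(q1 + q2) * e = q1 * e + q2 * e" by (simp add: add_mult_distrib)
    ultimately show ?thesis using ee False by linarith
  qed
  then have "6 * delta \<le> 3 * (q1 * a1) + 3 * (q2 * a2) + 3" by linarith
  then show ?thesis using e tot v b fs1 fs2 by (simp add: mult.assoc)
qed

lemma caseB: "6 * delta + 3 \<le> card (CP X)"
proof (cases "\<exists>x1\<in>T. \<exists>x2\<in>T. x1 \<noteq> x2 \<and> \<not> gadj x1 x2")
  case True
  then obtain x1 x2 where "x1 \<in> T" "x2 \<in> T" "x1 \<noteq> x2" "\<not> gadj x1 x2" by blast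
  then show ?thesis by (rule B2)
next
  case False
  then have cl: "\<And>x1 x2. x1 \<in> T \<Longrightarrow> x2 \<in> T \<Longrightarrow> x1 \<noteq> x2 \<Longrightarrow> gadj x1 x2" by blast
  show ?thesis
  proof (cases "\<exists>x1\<in>T. \<exists>x2\<in>T. \<exists>x3\<in>T. x1 \<noteq> x2 \<and> x1 \<noteq> x3 \<and> x2 \<noteq> x3")
    case True
    then obtain x1 x2 x3 where x: "x1 \<in> T" "x2 \<in> T" "x3 \<in> T" "x1 \<noteq> x2" "x1 \<noteq> x3" "x2 \<noteq> x3"
      by blast
    show ?thesis by (rule B3[OF x cl cl cl]) (use x in auto)
  next
    case False3: False
    obtain x1 where x1: "x1 \<in> T" using T_ne by blast
    show ?thesis
    proof (cases "\<exists>x2\<in>T. x2 \<noteq> x1")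
      case True
      then obtain x2 where x2: "x2 \<in> T" "x2 \<noteq> x1" by blast
      have "T = {x1,x2}" using False3 x1 x2 by blast
      then show ?thesis by (rule B4) (use x1 x2 cl in auto)
    next
      case False
      then have "T = {x1}" using x1 by blast
      then show ?thesis by (rule B1)
    qed
  qed
qed

end

context SP2 begin

lemma CP_swap: assumes "X \<subseteq> VP" shows "card (CP (VP - X)) = card (CP X)"
proof -
  have "CP (VP - X) = (\<lambda>(u,v). (v,u)) ` CP X"
  proof
    show "CP (VP - X) \<subseteq> (\<lambda>(u,v). (v,u)) ` CP X"
    proof
      fix p assume "p \<in> CP (VP - X)"
      then obtain u v where p: "p = (u,v)" "u \<in> VP" "u \<notin> X" "v \<in> X" "padj u v"
        unfolding CP_def by auto
      then have "(v,u) \<in> CP X" using padj_sym unfolding CP_def by auto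
      then show "p \<in> (\<lambda>(u,v). (v,u)) ` CP X" using p by (auto intro: rev_image_eqI)
    qed
    show "(\<lambda>(u,v). (v,u)) ` CP X \<subseteq> CP (VP - X)"
      using assms padj_sym unfolding CP_def by auto
  qed
  moreover have "inj_on (\<lambda>(u,v). (v,u)) (CP X)" unfolding inj_on_def by auto
  ultimately show ?thesis by (simp add: card_image)
qed

lemma main_cnt:
  assumes XV: "X \<subseteq> VP" and X3: "3 \<le> card X" and Y3: "3 \<le> card (VP - X)"
  shows "6 * delta + 3 \<le> card (CP X)"
proof (cases "(\<exists>f\<in>V. \<forall>j<n. (f,j) \<in> X) \<and> (\<exists>g\<in>V. \<forall>j<n. (g,j) \<notin> X)")
  case True
  then obtain f g where "f \<in> V" "\<forall>j<n. (f,j) \<in> X" "g \<in> V" "\<forall>j<n. (g,j) \<notin> X" by blast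
  then have "3 * n * lam \<le> card (CP X)" by (rule caseA)
  then show ?thesis using h1 by linarith
next
  case False
  show ?thesis
  proof (cases "\<forall>x\<in>V. \<exists>i<n. (x,i) \<in> X")
    case True
    interpret B: SPB G n X by unfold_locales (use XV True Y3 in auto)
    show ?thesis by (rule B.caseB)
  next
    case ne: False
    then have nf: "\<forall>x\<in>V. \<exists>i<n. (x,i) \<notin> X" using False by blast
    have XX: "VP - (VP - X) = X" using XV by auto
    interpret B: SPB G n "VP - X"
      by unfold_locales (use nf XX X3 in \<open>auto simp: VP_def\<close>)
    have "6 * delta + 3 \<le> card (CP (VP - X))" by (rule B.caseB)
    then show ?thesis using CP_swap[OF XV] by simp
  qed
qed

lemma finEP: "finite (edges P)"
proof -
  have "edges P \<subseteq> Pow VP"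
  proof
    fix e assume "e \<in> edges P"
    then obtain u v where "e = {u,v}" "padj u v" unfolding edgesP by auto
    then show "e \<in> Pow VP" unfolding padj_def VP_def by (cases u, cases v) auto
  qed
  then show ?thesis by (rule finite_subset) (simp add: finVP)
qed

lemma vertsP2: "verts P = VP" unfolding VP_def by (rule vertsP)

lemma rt_sym:
  assumes "(a,b) \<in> (adj_rel (del_edges P S))\<^sup>*" shows "(b,a) \<in> (adj_rel (del_edges P S))\<^sup>*"
proof -
  have c: "(adj_rel (del_edges P S))\<inverse> = adj_rel (del_edges P S)"
    unfolding adj_rel_def by (auto simp: insert_commute)
  have "(b,a) \<in> ((adj_rel (del_edges P S))\<inverse>)\<^sup>*" using assms by (rule rtrancl_converseI)
  then show ?thesis using c by simp
qed

lemma padj_VP: "padj u v \<Longrightarrow> u \<in> VP \<and> v \<in> VP"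
  unfolding padj_def VP_def by (cases u, cases v) auto

lemma crossing_le:
  assumes SE: "S \<subseteq> edges P" and XV: "X \<subseteq> VP"
    and cl: "\<And>u v. u \<in> X \<Longrightarrow> padj u v \<Longrightarrow> {u,v} \<notin> S \<Longrightarrow> v \<in> X"
  shows "card (CP X) \<le> card S"
proof (rule inj_img_card_le[of "\<lambda>(u,v). {u,v}"])
  show "inj_on (\<lambda>(u,v). {u,v}) (CP X)"
    unfolding inj_on_def CP_def by (auto simp: doubleton_eq_iff)
  show "(\<lambda>(u,v). {u,v}) ` CP X \<subseteq> S"
  proof
    fix e assume "e \<in> (\<lambda>(u,v). {u,v}) ` CP X"
    then obtain u v where "e = {u,v}" "u \<in> X" "v \<notin> X" "padj u v" unfolding CP_def by auto
    then show "e \<in> S" using cl by blast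
  qed
  show "finite S" using SE finEP by (rule finite_subset)
qed

lemma nbr_card:
  assumes y: "y < n"
  shows "card {v. padj (x0,y) v} \<le> 3 * card (N x0) + 2"
proof -
  have "{v. padj (x0,y) v} \<subseteq> (N x0 \<times> {y, sc y, pr y}) \<union> {(x0, sc y), (x0, pr y)}"
  proof
    fix v assume "v \<in> {v. padj (x0,y) v}"
    then obtain z j where v: "v = (z,j)" "padj (x0,y) (z,j)" by (cases v) auto
    then have j: "j < n" unfolding padj_def by simp
    have "y = sc j \<Longrightarrow> j = pr y" using sc_pr[OF y] sc_inj[OF j pr_lt[OF y]] by simp
    then show "v \<in> (N x0 \<times> {y, sc y, pr y}) \<union> {(x0, sc y), (x0, pr y)}"
      using v unfolding padj_def N_def by auto
  qed
  then have "card {v. padj (x0,y) v} \<le> card ((N x0 \<times> {y, sc y, pr y}) \<union> {(x0, sc y), (x0, pr y)})"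
    using finN by (intro card_mono) auto
  also have "\<dots> \<le> card (N x0 \<times> {y, sc y, pr y}) + card {(x0, sc y), (x0, pr y)}"
    by (rule card_Un_le)
  also have "card (N x0 \<times> {y, sc y, pr y}) = card (N x0) * card {y, sc y, pr y}"
    by (rule card_cartesian_product)
  also have "card {y, sc y, pr y} \<le> 3" by (simp add: card_insert_if)
  also have "card {(x0, sc y), (x0, pr y)} \<le> 2" by (simp add: card_insert_if)
  finally show ?thesis by simp
qed

end

context SP2 begin

lemma sc0: "sc 0 = 1" using n3 unfolding sc_def by simp

lemma T0_cut:
  obtains T0 where "restricted_edge_cut P T0" "card T0 \<le> 6 * delta + 2"
proof -
  obtain x0 where x0: "x0 \<in> V" "card (N x0) = delta" using delta_ex[OF Vne] by blast
  obtain z0 where z0: "z0 \<in> N x0"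
  proof -
    have "N x0 \<noteq> {}" using x0 delta_pos by auto
    then show ?thesis using that by blast
  qed
  have gz0: "gadj x0 z0" using z0 unfolding N_def by simp
  have z0V: "z0 \<in> V" "z0 \<noteq> x0" using gadjD[OF gz0] by auto
  define a where "a = (x0, 0::nat)"
  define b where "b = (x0, 1::nat)"
  have n0: "0 < n" "1 < n" "2 < n" using n3 by auto
  have ab: "padj a b" unfolding a_def b_def padj_def using x0 n0 sc0 by simp
  have abne: "a \<noteq> b" unfolding a_def b_def by simp
  define K where "K = {a,b}"
  define T0 where "T0 = {e \<in> edges P. e \<inter> K \<noteq> {} \<and> e \<noteq> {a,b}}"
  define Na where "Na = {v. padj a v}"
  define Nb where "Nb = {v. padj b v}"
  have T0sub: "T0 \<subseteq> (\<lambda>v. {a,v}) ` (Na - {b}) \<union> (\<lambda>v. {b,v}) ` (Nb - {a})"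
  proof
    fix e assume "e \<in> T0"
    then have e: "e \<in> edges P" "e \<inter> K \<noteq> {}" "e \<noteq> {a,b}" unfolding T0_def by auto
    then obtain u v where uv: "e = {u,v}" "padj u v" unfolding edgesP by auto
    have "u \<in> K \<or> v \<in> K" using e uv by auto
    then show "e \<in> (\<lambda>v. {a,v}) ` (Na - {b}) \<union> (\<lambda>v. {b,v}) ` (Nb - {a})"
    proof
      assume "u \<in> K"
      then have "u = a \<or> u = b" unfolding K_def by simp
      then show ?thesis
      proof
        assume "u = a"
        then have "v \<in> Na - {b}" using uv e unfolding Na_def by auto
        then show ?thesis using uv \<open>u = a\<close> by auto
      next
        assume "u = b"
        then have "v \<in> Nb - {a}" using uv e unfolding Nb_def by (auto simp: insert_commute)
        then show ?thesis using uv \<open>u = b\<close> by auto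
      qed
    next
      assume "v \<in> K"
      have pvu: "padj v u" using uv padj_sym by simp
      have "v = a \<or> v = b" using \<open>v \<in> K\<close> unfolding K_def by simp
      then show ?thesis
      proof
        assume "v = a"
        then have "u \<in> Na - {b}" using pvu e uv unfolding Na_def by (auto simp: insert_commute)
        then show ?thesis using uv \<open>v = a\<close> by (auto simp: insert_commute)
      next
        assume "v = b"
        then have "u \<in> Nb - {a}" using pvu e uv unfolding Nb_def by auto
        then show ?thesis using uv \<open>v = b\<close> by (auto simp: insert_commute)
      qed
    qed
  qed
  have cNa: "card Na \<le> 3 * delta + 2" unfolding Na_def a_def using nbr_card[of 0 x0] n0 x0 by simp
  have cNb: "card Nb \<le> 3 * delta + 2" unfolding Nb_def b_def using nbr_card[of 1 x0] n0 x0 by simp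
  have finNa: "finite Na"
  proof -
    have "Na \<subseteq> VP" unfolding Na_def using padj_VP by blast
    then show ?thesis by (rule finite_subset) (simp add: finVP)
  qed
  have finNb: "finite Nb"
  proof -
    have "Nb \<subseteq> VP" unfolding Nb_def using padj_VP by blast
    then show ?thesis by (rule finite_subset) (simp add: finVP)
  qed
  have bNa: "b \<in> Na" using ab unfolding Na_def by simp
  have aNb: "a \<in> Nb" using ab padj_sym unfolding Nb_def by simp
  have c1: "card (Na - {b}) + 1 = card Na" using card.remove[OF finNa bNa] by simp
  have c2: "card (Nb - {a}) + 1 = card Nb" using card.remove[OF finNb aNb] by simp
  have "card T0 \<le> card ((\<lambda>v. {a,v}) ` (Na - {b}) \<union> (\<lambda>v. {b,v}) ` (Nb - {a}))"
    using T0sub finNa finNb by (intro card_mono) auto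
  also have "\<dots> \<le> card ((\<lambda>v. {a,v}) ` (Na - {b})) + card ((\<lambda>v. {b,v}) ` (Nb - {a}))"
    by (rule card_Un_le)
  also have "card ((\<lambda>v. {a,v}) ` (Na - {b})) \<le> card (Na - {b})" using finNa by (intro card_image_le) simp
  also have "card ((\<lambda>v. {b,v}) ` (Nb - {a})) \<le> card (Nb - {a})" using finNb by (intro card_image_le) simp
  finally have cardT0: "card T0 \<le> 6 * delta + 2" using c1 c2 cNa cNb by linarith
  let ?R = "adj_rel (del_edges P T0)"
  have Rdef: "(u,v) \<in> ?R \<longleftrightarrow> {u,v} \<in> edges P \<and> {u,v} \<notin> T0" for u v
    unfolding adj_rel_def del_edges_def edges_def by simp
  have vd: "verts (del_edges P T0) = VP" using vertsP2 unfolding del_edges_def verts_def by simp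
  have reachK: "w \<in> K" if "(a, w) \<in> ?R\<^sup>*" for w
    using that
  proof (induction rule: rtrancl_induct)
    case base then show ?case unfolding K_def by simp
  next
    case (step w w')
    then have "{w,w'} \<in> edges P" "{w,w'} \<notin> T0" using Rdef by auto
    then have "{w,w'} = {a,b}" using step.IH unfolding T0_def by auto
    then show ?case unfolding K_def by auto
  qed
  have notconn: "\<not> connected_graph (del_edges P T0)"
  proof
    assume "connected_graph (del_edges P T0)"
    moreover have "a \<in> VP" "(x0, 2) \<in> VP" unfolding a_def VP_def using x0 n0 by auto
    ultimately have "(a, (x0,2)) \<in> ?R\<^sup>*" unfolding connected_graph_def vd by blast
    then have "(x0, 2::nat) \<in> K" by (rule reachK)
    then show False unfolding K_def a_def b_def by simp
  qed
  have T0E: "T0 \<subseteq> edges P" unfolding T0_def by auto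
  have edgeR: "(u,v) \<in> ?R" if "padj u v" "{u,v} \<inter> K = {} \<or> {u,v} = {a,b}" for u v
  proof -
    have "{u,v} \<in> edges P" using that P_edge by simp
    moreover have "{u,v} \<notin> T0" using that unfolding T0_def by auto
    ultimately show ?thesis using Rdef by simp
  qed
  have comps: "2 \<le> card C" if Cc: "C \<in> components (del_edges P T0)" for C
  proof -
    obtain v where v: "v \<in> VP" "C = {y \<in> VP. (v,y) \<in> ?R\<^sup>*}"
      using Cc unfolding components_def vd by blast
    have "\<exists>w. w \<noteq> v \<and> w \<in> VP \<and> (v,w) \<in> ?R"
    proof (cases "v \<in> K")
      case True
      then have "v = a \<or> v = b" unfolding K_def by simp
      then show ?thesis
      proof
        assume "v = a"
        have "(a,b) \<in> ?R" using edgeR[of a b] ab by simp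
        then have "b \<noteq> v \<and> b \<in> VP \<and> (v,b) \<in> ?R" using \<open>v = a\<close> abne padj_VP[OF ab] by simp
        then show ?thesis by (rule exI)
      next
        assume "v = b"
        have "(b,a) \<in> ?R" using edgeR[of b a] ab padj_sym by (simp add: insert_commute)
        then have "a \<noteq> v \<and> a \<in> VP \<and> (v,a) \<in> ?R" using \<open>v = b\<close> abne padj_VP[OF ab] by simp
        then show ?thesis by (rule exI)
      qed
    next
      case False
      obtain z j where zj: "v = (z,j)" by (cases v)
      have zj2: "z \<in> V" "j < n" using v zj unfolding VP_def by auto
      show ?thesis
      proof (cases "z = x0")
        case False
        let ?w = "(z, sc j)"
        have p: "padj v ?w" using zj zj2 sc_lt unfolding padj_def by simp
        have "{v,?w} \<inter> K = {}" using \<open>v \<notin> K\<close> False zj unfolding K_def a_def b_def by auto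
        then have "(v,?w) \<in> ?R" using edgeR p by blast
        moreover have "?w \<noteq> v" using zj sc_neq[OF zj2(2)] by simp
        ultimately show ?thesis using padj_VP[OF p] by blast
      next
        case True
        let ?w = "(z0, j)"
        have p: "padj v ?w" using zj zj2 z0V gz0 True unfolding padj_def by simp
        have "{v,?w} \<inter> K = {}" using \<open>v \<notin> K\<close> z0V unfolding K_def a_def b_def by auto
        then have "(v,?w) \<in> ?R" using edgeR p by blast
        moreover have "?w \<noteq> v" using zj z0V True by simp
        ultimately show ?thesis using padj_VP[OF p] by blast
      qed
    qed
    then obtain w where w: "w \<noteq> v" "w \<in> VP" "(v,w) \<in> ?R" by blast
    have "{v,w} \<subseteq> C" using v w by auto
    moreover have "finite C" using v(2) finVP by simp
    ultimately have "card {v,w} \<le> card C" by (intro card_mono)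
    then show ?thesis using w by simp
  qed
  have "restricted_edge_cut P T0"
    unfolding restricted_edge_cut_def edge_cut_def using T0E notconn comps by blast
  then show ?thesis using that cardT0 by blast
qed

end

context SP2 begin

lemma super: "super_restricted_edge_connected P"
  unfolding super_restricted_edge_connected_def
proof (intro allI impI)
  fix S assume a: "restricted_edge_cut P S \<and> (\<forall>T. restricted_edge_cut P T \<longrightarrow> card S \<le> card T)"
  then have rS: "restricted_edge_cut P S" and minS: "\<And>T. restricted_edge_cut P T \<Longrightarrow> card S \<le> card T"
    by auto
  let ?R = "adj_rel (del_edges P S)"
  have SE: "S \<subseteq> edges P" using rS unfolding restricted_edge_cut_def edge_cut_def by simp
  have vd: "verts (del_edges P S) = VP" using vertsP2 unfolding del_edges_def verts_def by simp
  have c2: "\<And>C. C \<in> components (del_edges P S) \<Longrightarrow> 2 \<le> card C"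
    using rS unfolding restricted_edge_cut_def by blast
  show "\<exists>C\<in>components (del_edges P S). card C = 2"
  proof (rule ccontr)
    assume no2: "\<not> ?thesis"
    have c3: "3 \<le> card C" if "C \<in> components (del_edges P S)" for C
      using c2[OF that] no2 that by fastforce
    have nc: "\<not> connected_graph (del_edges P S)"
      using rS unfolding restricted_edge_cut_def edge_cut_def by simp
    have VPne: "VP \<noteq> {}" using Vne n3 unfolding VP_def by auto
    obtain c d where cd: "c \<in> VP" "d \<in> VP" "(c,d) \<notin> ?R\<^sup>*"
      using nc VPne unfolding connected_graph_def vd by blast
    define X where "X = {y \<in> VP. (c,y) \<in> ?R\<^sup>*}"
    define Cd where "Cd = {y \<in> VP. (d,y) \<in> ?R\<^sup>*}"
    have XC: "X \<in> components (del_edges P S)" unfolding X_def components_def vd using cd by blast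
    have CdC: "Cd \<in> components (del_edges P S)" unfolding Cd_def components_def vd using cd by blast
    have X3: "3 \<le> card X" using c3[OF XC] .
    have XV: "X \<subseteq> VP" unfolding X_def by auto
    have "Cd \<subseteq> VP - X"
    proof
      fix y assume "y \<in> Cd"
      then have y: "y \<in> VP" "(d,y) \<in> ?R\<^sup>*" unfolding Cd_def by auto
      have "y \<notin> X"
      proof
        assume "y \<in> X"
        then have "(c,y) \<in> ?R\<^sup>*" unfolding X_def by simp
        moreover have "(y,d) \<in> ?R\<^sup>*" using rt_sym[OF y(2)] .
        ultimately have "(c,d) \<in> ?R\<^sup>*" by (rule rtrancl_trans)
        then show False using cd by simp
      qed
      then show "y \<in> VP - X" using y by simp
    qed
    then have "card Cd \<le> card (VP - X)" using finVP by (intro card_mono) auto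
    then have Y3: "3 \<le> card (VP - X)" using c3[OF CdC] by simp
    have "card (CP X) \<le> card S"
    proof (rule crossing_le[OF SE XV])
      fix u v assume u: "u \<in> X" and p: "padj u v" and nS: "{u,v} \<notin> S"
      have "(u,v) \<in> ?R" using p nS P_edge unfolding adj_rel_def del_edges_def edges_def by simp
      then have "(c,v) \<in> ?R\<^sup>*" using u unfolding X_def by (auto intro: rtrancl_into_rtrancl)
      then show "v \<in> X" unfolding X_def using padj_VP[OF p] by simp
    qed
    moreover have "6 * delta + 3 \<le> card (CP X)" by (rule main_cnt[OF XV X3 Y3])
    moreover obtain T0 where "restricted_edge_cut P T0" "card T0 \<le> 6 * delta + 2" by (rule T0_cut)
    ultimately show False using minS by fastforce
  qed
qed

end


theorem corollary3p6:
  fixes G :: "'a graph" and n :: nat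
  assumes "simple_graph G"
    and "connected_graph G"
    and "card (verts G) \<ge> 2"
    and "n \<ge> 3"
    and "min (3 * n * edge_connectivity G) (2 * (card (verts G) + 2 * num_edges G))
           > 6 * min_degree G + 2"
  shows "super_restricted_edge_connected (strong_product G (cycle_graph n))"
proof -
  have h: "6 * min_degree G + 2 < 3 * n * edge_connectivity G"
          "6 * min_degree G + 2 < 2 * (card (verts G) + 2 * num_edges G)"
    using assms(5) by simp_all
  interpret SP2 G n
    by unfold_locales (use assms h in auto)
  show ?thesis using super unfolding P_def .
qed

end
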